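(* Let $d\ge2$ and $\widehat K_1(t)=\int_{\mathbb R^{d-1}}K_1(t,\zeta_2,\dots,\zeta_d)\,d\zeta_2\cdots d\zeta_d$ for $t>0$. Then there exists a positive Borel measure $\mu$ on $[0,+\infty)$ such that $\widehat K_1(t)=\int_0^{+\infty}e^{-\alpha t}\,d\mu(\alpha)$ for all $t>0$.
   Context: $K_1(\zeta)=e^{-|\zeta|_1}/|\zeta|_1^{d-2}$ for $\zeta\in\mathbb R^d$, where $|\zeta|_1=\sum_i|\zeta_i|$. *)

theory Defs
  imports "HOL-Analysis.Analysis"
begin

definition l1norm :: "'a::euclidean_space \<Rightarrow> real" where
  "l1norm \<zeta> = (\<Sum>b\<in>Basis. \<bar>\<zeta> \<bullet> b\<bar>)"

definition K1 :: "'a::euclidean_space \<Rightarrow> real" where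
  "K1 \<zeta> = exp (- l1norm \<zeta>) / l1norm \<zeta> ^ (DIM('a) - 2)"

text \<open>Hat K_1(t): integral of K_1(t, zeta_2, ..., zeta_d) over R^(d-1) = real^'n,
  so that R^d is modelled as real \<times> real^'n and d = CARD('n) + 1 \<ge> 2.\<close>
definition K1hat :: "'n::finite itself \<Rightarrow> real \<Rightarrow> real" where
  "K1hat _ t = (\<integral>z. K1 (t, z :: real^'n) \<partial>lborel)"

end

theory Submission
  imports Defs "HOL-Probability.Probability"
begin

lemma l1norm_pair: "l1norm ((t, z) :: real \<times> 'b::euclidean_space) = \<bar>t\<bar> + l1norm z"
  unfolding l1norm_def Basis_prod_def
  by (subst sum.union_disjoint) (auto simp: sum.reindex inj_on_def)

lemma l1norm_nonneg: "0 \<le> l1norm z"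
  unfolding l1norm_def by (simp add: sum_nonneg)

lemma l1norm_meas[measurable]: "l1norm \<in> borel_measurable borel"
  unfolding l1norm_def
  by (intro borel_measurable_continuous_onI continuous_intros)

lemma exp_abs_finite: "(\<integral>\<^sup>+x. ennreal (exp (- \<bar>x::real\<bar>)) \<partial>lborel) < \<infinity>"
proof -
  have e1: "(\<integral>\<^sup>+x. ennreal (erlang_density 0 1 x) \<partial>lborel) = 1"
    using nn_integral_erlang_ith_moment[of 1 0 0] by simp
  have e2: "(\<integral>\<^sup>+x. ennreal (erlang_density 0 1 (-x)) \<partial>lborel) = 1"
    using e1 nn_integral_real_affine[of "\<lambda>x. ennreal (erlang_density 0 1 x)" "-1" 0] by simp
  have "(\<integral>\<^sup>+x. ennreal (exp (- \<bar>x::real\<bar>)) \<partial>lborel)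
     \<le> (\<integral>\<^sup>+x. ennreal (erlang_density 0 1 x) + ennreal (erlang_density 0 1 (-x)) \<partial>lborel)"
    by (intro nn_integral_mono) (auto simp: erlang_density_def ennreal_plus[symmetric] simp del: ennreal_plus)
  also have "\<dots> = 2"
    by (subst nn_integral_add) (auto simp: e1 e2)
  finally show ?thesis by (simp add: le_less_trans)
qed

lemma F1_finite: "(\<integral>\<^sup>+z. ennreal (exp (- l1norm (z::'a::euclidean_space))) \<partial>lborel) < \<infinity>"
proof -
  have "(\<integral>\<^sup>+z. ennreal (exp (- l1norm (z::'a))) \<partial>lborel) =
        (\<integral>\<^sup>+z. (\<Prod>b\<in>Basis. ennreal (exp (- \<bar>(z::'a) \<bullet> b\<bar>))) \<partial>lborel)"
    by (simp add: l1norm_def exp_sum[symmetric] sum_negf prod_ennreal)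
  also have "\<dots> = (\<Prod>b\<in>(Basis::'a set). (\<integral>\<^sup>+x. exp (- \<bar>x\<bar>) \<partial>lborel))"
    by (subst nn_integral_lborel_prod) auto
  also have "\<dots> < \<infinity>"
    using exp_abs_finite by (simp add: less_top[symmetric] power_eq_top_ennreal)
  finally show ?thesis .
qed

definition gk :: "nat \<Rightarrow> real \<Rightarrow> real" where
  "gk m a = (if 1 \<le> a then (a - 1) ^ (m - 1) / fact (m - 1) else 0)"

lemma gk_meas[measurable]: "gk m \<in> borel_measurable borel"
  unfolding gk_def by measurable

lemma gk_nonneg: "0 \<le> gk m a"
  unfolding gk_def by auto

lemma laplace1:
  assumes m: "1 \<le> m" and s: "0 < s"
  shows "ennreal (exp (- s) / s ^ m) = (\<integral>\<^sup>+a. ennreal (exp (- a * s) * gk m a) \<partial>lborel)"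
proof -
  obtain k where k: "m = Suc k" using m by (cases m) auto
  have "(\<integral>\<^sup>+a. ennreal (exp (- a * s) * gk m a) \<partial>lborel) =
        (\<integral>\<^sup>+x. ennreal (exp (- (1 + x) * s) * gk m (1 + x)) \<partial>lborel)"
    using nn_integral_real_affine[of "\<lambda>a. ennreal (exp (- a * s) * gk m a)" 1 1] by simp
  also have "\<dots> = (\<integral>\<^sup>+x. ennreal (exp (- s) / s ^ m) * ennreal (erlang_density k s x) \<partial>lborel)"
    using s
    by (intro nn_integral_cong)
       (auto simp: k gk_def erlang_density_def ennreal_mult'[symmetric] field_simps exp_add[symmetric] exp_diff)
  also have "\<dots> = ennreal (exp (- s) / s ^ m) * (\<integral>\<^sup>+x. ennreal (erlang_density k s x) \<partial>lborel)"
    by (rule nn_integral_cmult) simp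
  also have "(\<integral>\<^sup>+x. ennreal (erlang_density k s x) \<partial>lborel) = 1"
    using nn_integral_erlang_ith_moment[OF s, of k 0] by simp
  finally show ?thesis by simp
qed

lemma K1_pair:
  assumes t: "0 < t"
  shows "K1 ((t, z) :: real \<times> (real^'n::finite)) =
         exp (- (t + l1norm z)) / (t + l1norm z) ^ (CARD('n) - 1)"
  using t by (simp add: K1_def l1norm_pair)

lemma K1hat_nn:
  assumes t: "0 < t"
  shows "ennreal (K1hat TYPE('n::finite) t) =
         (\<integral>\<^sup>+z. ennreal (exp (- (t + l1norm z)) / (t + l1norm (z::real^'n)) ^ (CARD('n) - 1)) \<partial>lborel)"
proof -
  let ?f = "\<lambda>z::real^'n. exp (- (t + l1norm z)) / (t + l1norm z) ^ (CARD('n) - 1)"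
  have tpos: "\<And>z. 0 < t + l1norm (z::real^'n)" using t l1norm_nonneg by (metis add_pos_nonneg)
  have nn: "\<And>z. 0 \<le> ?f z" using tpos by (simp add: less_imp_le)
  have bnd: "\<And>z. ?f z \<le> (exp (- t) / t ^ (CARD('n) - 1)) * exp (- l1norm z)"
  proof -
    fix z :: "real^'n"
    have L: "0 \<le> l1norm z" by (rule l1norm_nonneg)
    have "?f z \<le> exp (- (t + l1norm z)) / t ^ (CARD('n) - 1)"
      using t L by (intro divide_left_mono power_mono mult_pos_pos) auto
    also have "\<dots> = (exp (- t) / t ^ (CARD('n) - 1)) * exp (- l1norm z)"
      by (simp add: exp_diff exp_minus field_simps exp_add)
    finally show "?f z \<le> (exp (- t) / t ^ (CARD('n) - 1)) * exp (- l1norm z)" .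
  qed
  have "(\<integral>\<^sup>+z. ennreal (?f z) \<partial>lborel) \<le>
        (\<integral>\<^sup>+z. ennreal (exp (- t) / t ^ (CARD('n) - 1)) * ennreal (exp (- l1norm (z::real^'n))) \<partial>lborel)"
    proof (rule nn_integral_mono)
    fix z :: "real^'n"
    have "ennreal (?f z) \<le> ennreal ((exp (- t) / t ^ (CARD('n) - 1)) * exp (- l1norm z))"
      using bnd[of z] by (rule ennreal_leI)
    then show "ennreal (?f z) \<le> ennreal (exp (- t) / t ^ (CARD('n) - 1)) * ennreal (exp (- l1norm z))"
      by (subst ennreal_mult[symmetric]) (use t in auto)
  qed
  also have "\<dots> = ennreal (exp (- t) / t ^ (CARD('n) - 1)) * (\<integral>\<^sup>+z. ennreal (exp (- l1norm (z::real^'n))) \<partial>lborel)"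
    by (rule nn_integral_cmult) simp
  also have "\<dots> < \<infinity>" using F1_finite[where 'a="real^'n"] by (simp add: ennreal_mult_less_top)
  finally have fin: "(\<integral>\<^sup>+z. ennreal (?f z) \<partial>lborel) < \<infinity>" .
  have int: "integrable lborel ?f"
    by (rule integrableI_nonneg) (use nn fin in auto)
  have "K1hat TYPE('n) t = (\<integral>z. ?f z \<partial>lborel)"
  proof -
    have "\<And>z::real^'n. K1 (t, z) = ?f z" by (rule K1_pair[OF t])
    then show ?thesis unfolding K1hat_def by simp
  qed
  then show ?thesis
    using nn_integral_eq_integral[OF int] nn by simp
qed

theorem lemma3p2:
  "\<exists>\<mu> :: real measure.
     sets \<mu> = sets (restrict_space borel {0..}) \<and>
     (\<forall>t>0. ennreal (K1hat TYPE('n::finite) t) =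
              (\<integral>\<^sup>+ \<alpha>. ennreal (exp (- \<alpha> * t)) \<partial>\<mu>))"
proof (cases "CARD('n) = 1")
  case True
  define F1 where "F1 = (\<integral>\<^sup>+z. ennreal (exp (- l1norm (z::real^'n))) \<partial>lborel)"
  let ?M = "restrict_space borel {0::real..}"
  show ?thesis
  proof (intro exI conjI allI impI)
    show "sets (density (return ?M 1) (\<lambda>_. F1)) = sets ?M" by simp
    fix t :: real assume t: "0 < t"
    have "ennreal (K1hat TYPE('n) t) = (\<integral>\<^sup>+z. ennreal (exp (- (t + l1norm (z::real^'n)))) \<partial>lborel)"
      using K1hat_nn[OF t, where 'n='n] True by simp
    also have "\<dots> = (\<integral>\<^sup>+z. ennreal (exp (- t)) * ennreal (exp (- l1norm (z::real^'n))) \<partial>lborel)"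
      by (intro nn_integral_cong) (simp add: ennreal_mult[symmetric] exp_add[symmetric])
    also have "\<dots> = ennreal (exp (- t)) * F1"
      unfolding F1_def by (rule nn_integral_cmult) simp
    also have "\<dots> = (\<integral>\<^sup>+ \<alpha>. ennreal (exp (- \<alpha> * t)) \<partial>density (return ?M 1) (\<lambda>_. F1))"
    proof -
      have me: "(\<lambda>\<alpha>::real. ennreal (exp (- \<alpha> * t))) \<in> borel_measurable ?M"
        by (rule measurable_restrict_space1) measurable
      show ?thesis
        by (subst nn_integral_density) (use me in \<open>auto simp: nn_integral_return space_restrict_space mult.commute\<close>)
    qed
    finally show "ennreal (K1hat TYPE('n) t) = (\<integral>\<^sup>+ \<alpha>. ennreal (exp (- \<alpha> * t)) \<partial>density (return ?M 1) (\<lambda>_. F1))" .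
  qed
next
  case False
  define m where "m = CARD('n) - 1"
  have c0: "0 < CARD('n)" by simp
  have m1: "1 \<le> m" using False c0 unfolding m_def by linarith
  define F where "F \<alpha> = (\<integral>\<^sup>+z. ennreal (exp (- \<alpha> * l1norm (z::real^'n))) \<partial>lborel)" for \<alpha> :: real
  have Fm[measurable]: "F \<in> borel_measurable borel" unfolding F_def
    by (rule sigma_finite_measure.borel_measurable_nn_integral[OF lborel.sigma_finite_measure_axioms]) measurable
  let ?M = "restrict_space lborel {0::real..}"
  let ?mu = "density ?M (\<lambda>\<alpha>. ennreal (gk m \<alpha>) * F \<alpha>)"
  have PS: "pair_sigma_finite (lborel :: (real^'n) measure) (lborel :: real measure)"
    by (simp add: pair_sigma_finite_def lborel.sigma_finite_measure_axioms)
  show ?thesis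
  proof (intro exI conjI allI impI)
    show "sets ?mu = sets (restrict_space borel {0..})" by (simp add: sets_restrict_space)
    fix t :: real assume t: "0 < t"
    have tpos: "\<And>z. 0 < t + l1norm (z::real^'n)" using t l1norm_nonneg by (metis add_pos_nonneg)
    have "ennreal (K1hat TYPE('n) t) = (\<integral>\<^sup>+z. ennreal (exp (- (t + l1norm z)) / (t + l1norm (z::real^'n)) ^ m) \<partial>lborel)"
      using K1hat_nn[OF t, where 'n='n] unfolding m_def .
    also have "\<dots> = (\<integral>\<^sup>+z. (\<integral>\<^sup>+\<alpha>. ennreal (exp (- \<alpha> * (t + l1norm (z::real^'n))) * gk m \<alpha>) \<partial>lborel) \<partial>lborel)"
      by (intro nn_integral_cong laplace1 m1 tpos)
    also have "\<dots> = (\<integral>\<^sup>+\<alpha>. (\<integral>\<^sup>+z. ennreal (exp (- \<alpha> * (t + l1norm (z::real^'n))) * gk m \<alpha>) \<partial>lborel) \<partial>lborel)"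
      by (rule pair_sigma_finite.Fubini'[OF PS, symmetric]) (simp add: case_prod_beta', measurable)
    also have "\<dots> = (\<integral>\<^sup>+\<alpha>. ennreal (exp (- \<alpha> * t)) * (ennreal (gk m \<alpha>) * F \<alpha>) \<partial>lborel)"
    proof (intro nn_integral_cong)
      fix \<alpha> :: real
      have "(\<integral>\<^sup>+z. ennreal (exp (- \<alpha> * (t + l1norm (z::real^'n))) * gk m \<alpha>) \<partial>lborel)
          = (\<integral>\<^sup>+z. ennreal (exp (- \<alpha> * t) * gk m \<alpha>) * ennreal (exp (- \<alpha> * l1norm (z::real^'n))) \<partial>lborel)"
        by (intro nn_integral_cong)
           (simp add: ennreal_mult[symmetric] gk_nonneg exp_add[symmetric] algebra_simps)
      also have "\<dots> = ennreal (exp (- \<alpha> * t) * gk m \<alpha>) * F \<alpha>"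
        unfolding F_def by (rule nn_integral_cmult) simp
      finally show "(\<integral>\<^sup>+z. ennreal (exp (- \<alpha> * (t + l1norm (z::real^'n))) * gk m \<alpha>) \<partial>lborel)
          = ennreal (exp (- \<alpha> * t)) * (ennreal (gk m \<alpha>) * F \<alpha>)"
        by (simp add: ennreal_mult gk_nonneg mult.assoc)
    qed
    also have "\<dots> = (\<integral>\<^sup>+\<alpha>. (ennreal (gk m \<alpha>) * F \<alpha>) * ennreal (exp (- \<alpha> * t)) * indicator {0..} \<alpha> \<partial>lborel)"
      by (intro nn_integral_cong) (auto simp: gk_def mult_ac split: split_indicator)
    also have "\<dots> = (\<integral>\<^sup>+ \<alpha>. ennreal (exp (- \<alpha> * t)) \<partial>?mu)"
      by (subst nn_integral_density)
         (auto intro: measurable_restrict_space1 simp: nn_integral_restrict_space)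
    finally show "ennreal (K1hat TYPE('n) t) = (\<integral>\<^sup>+ \<alpha>. ennreal (exp (- \<alpha> * t)) \<partial>?mu)" .
  qed
qed

end
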